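(* Assume $r(x,y)>0$ for all distinct $x,y\in S$. For all $N$, $k\in\{0,1,\dots,N-1\}$ and $x\in S$, $$\mu_N(\mathcal C_N^S(x,k+1))\le\frac{R_2(k+d_N)(N-k)}{R_1(k+1)(N-k-1+d_N)}\,\mu_N(\mathcal C_N^S(x,k)),$$ where $\mathcal C_N^S(x,k)=\{\eta\in\mathcal H_N:\eta_x=k\}$, $R_1=\min\{r(a,b):a,b\in S,\ r(a,b)>0\}$ and $R_2=\max\{r(a,b):a,b\in S\}$.
   Context: $S$ is a finite set, $r:S\times S\to[0,\infty)$ with $r(x,x)=0$. $\mathcal H_N=\{\eta\in\{0,1,2,\dots\}^S:\sum_x\eta_x=N\}$; $\sigma^{x,y}\eta$ moves one particle from $x$ to $y$ (if $\eta_x\ge1$; else $\sigma^{x,y}\eta=\eta$). With $d_N>0$, the inclusion process is the continuous-time Markov chain on $\mathcal H_N$ with generator $(\mathcal L_NF)(\eta)=\sum_{x\ne y}\eta_x(d_N+\eta_y)r(x,y)\{F(\sigma^{x,y}\eta)-F(\eta)\}$, and $\mu_N$ is its unique invariant probability measure. *)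

theory Defs
  imports Complex_Main
begin

text \<open>Sites: a finite type 'a (S = UNIV). Configurations: 'a \<Rightarrow> nat.\<close>

definition config_space :: "nat \<Rightarrow> ('a::finite \<Rightarrow> nat) set" where
  "config_space N = {\<eta>. (\<Sum>x\<in>UNIV. \<eta> x) = N}"

definition sigma_move :: "'a \<Rightarrow> 'a \<Rightarrow> ('a \<Rightarrow> nat) \<Rightarrow> ('a \<Rightarrow> nat)" where
  "sigma_move x y \<eta> = (if 1 \<le> \<eta> x then (\<eta>(x := \<eta> x - 1))(y := (\<eta>(x := \<eta> x - 1)) y + 1) else \<eta>)"

definition incl_gen ::
  "real \<Rightarrow> ('a::finite \<Rightarrow> 'a \<Rightarrow> real) \<Rightarrow> (('a \<Rightarrow> nat) \<Rightarrow> real) \<Rightarrow> ('a \<Rightarrow> nat) \<Rightarrow> real" where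
  "incl_gen d r F \<eta> =
     (\<Sum>x\<in>UNIV. \<Sum>y\<in>UNIV - {x}.
        real (\<eta> x) * (d + real (\<eta> y)) * r x y * (F (sigma_move x y \<eta>) - F \<eta>))"

definition incl_invariant ::
  "real \<Rightarrow> ('a::finite \<Rightarrow> 'a \<Rightarrow> real) \<Rightarrow> nat \<Rightarrow> (('a \<Rightarrow> nat) \<Rightarrow> real) \<Rightarrow> bool" where
  "incl_invariant d r N \<mu> \<longleftrightarrow>
     (\<forall>\<eta>. \<mu> \<eta> \<ge> 0) \<and> (\<forall>\<eta>. \<eta> \<notin> config_space N \<longrightarrow> \<mu> \<eta> = 0) \<and>
     (\<Sum>\<eta>\<in>config_space N. \<mu> \<eta>) = 1 \<and>
     (\<forall>F. (\<Sum>\<eta>\<in>config_space N. \<mu> \<eta> * incl_gen d r F \<eta>) = 0)"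

definition site_count_set :: "nat \<Rightarrow> 'a::finite \<Rightarrow> nat \<Rightarrow> ('a \<Rightarrow> nat) set" where
  "site_count_set N x k = {\<eta> \<in> config_space N. \<eta> x = k}"

definition R1 :: "('a::finite \<Rightarrow> 'a \<Rightarrow> real) \<Rightarrow> real" where
  "R1 r = Min {r a b | a b. r a b > 0}"

definition R2 :: "('a::finite \<Rightarrow> 'a \<Rightarrow> real) \<Rightarrow> real" where
  "R2 r = Max {r a b | a b. True}"

end

theory Submission
  imports Defs
begin

lemma config_finite: "finite (config_space N :: ('a::finite \<Rightarrow> nat) set)"
proof -
  have "finite {f::'a\<Rightarrow>nat. \<forall>x. (x \<in> UNIV \<longrightarrow> f x \<in> {..N}) \<and> (x \<notin> UNIV \<longrightarrow> f x = 0)}"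
    by (rule finite_set_of_finite_funs) auto
  moreover have "config_space N \<subseteq> {f::'a\<Rightarrow>nat. \<forall>x. (x \<in> UNIV \<longrightarrow> f x \<in> {..N}) \<and> (x \<notin> UNIV \<longrightarrow> f x = 0)}"
  proof
    fix f :: "'a \<Rightarrow> nat" assume "f \<in> config_space N"
    then have s: "(\<Sum>y\<in>UNIV. f y) = N" by (simp add: config_space_def)
    have "\<forall>x. f x \<le> N"
    proof
      fix x
      have "f x \<le> (\<Sum>y\<in>UNIV. f y)" by (rule member_le_sum) auto
      then show "f x \<le> N" using s by simp
    qed
    then show "f \<in> {f::'a\<Rightarrow>nat. \<forall>x. (x \<in> UNIV \<longrightarrow> f x \<in> {..N}) \<and> (x \<notin> UNIV \<longrightarrow> f x = 0)}"
      by auto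
  qed
  ultimately show ?thesis using finite_subset by blast
qed

lemma sigma_x:
  assumes "z \<noteq> y"
  shows "sigma_move z y \<eta> x = (if 1 \<le> \<eta> z then (if z = x then \<eta> x - 1 else if y = x then \<eta> x + 1 else \<eta> x) else \<eta> x)"
  using assms by (auto simp: sigma_move_def)

lemma sum_rest:
  fixes \<eta> :: "'a::finite \<Rightarrow> nat"
  assumes "\<eta> \<in> config_space N"
  shows "(\<Sum>y\<in>UNIV - {x}. real (\<eta> y)) = real N - real (\<eta> x)"
proof -
  have "(\<Sum>y\<in>UNIV. real (\<eta> y)) = real N"
    using assms by (simp add: config_space_def flip: of_nat_sum)
  moreover have "(\<Sum>y\<in>UNIV. real (\<eta> y)) = real (\<eta> x) + (\<Sum>y\<in>UNIV - {x}. real (\<eta> y))"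
    by (simp add: sum.remove)
  ultimately show ?thesis by simp
qed

lemma term_eq_lemma:
  fixes \<eta> :: "'a \<Rightarrow> nat" and r :: "'a \<Rightarrow> 'a \<Rightarrow> real"
  assumes "z \<noteq> y"
  shows "real (\<eta> z) * (d + real (\<eta> y)) * r z y *
      ((if sigma_move z y \<eta> x \<le> k then 1 else 0) - (if \<eta> x \<le> k then 1 else 0))
      = (if z = x \<and> \<eta> x = k+1 then real (k+1) * (d + real (\<eta> y)) * r x y else 0)
        - (if y = x \<and> \<eta> x = k then real (\<eta> z) * (d + real k) * r z x else 0)"
proof (cases "\<eta> z = 0")
  case True
  then have "sigma_move z y \<eta> = \<eta>" by (simp add: sigma_move_def)
  then show ?thesis using True by auto
next
  case False
  then have s: "sigma_move z y \<eta> x = (if z = x then \<eta> x - 1 else if y = x then \<eta> x + 1 else \<eta> x)"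
    using assms by (simp add: sigma_x)
  show ?thesis
  proof (cases "z = x")
    case True
    then have "y \<noteq> x" using assms by simp
    then show ?thesis using s True False by auto
  next
    case zx: False
    show ?thesis
    proof (cases "y = x")
      case True
      then show ?thesis using s zx by auto
    next
      case False
      then show ?thesis using s zx by auto
    qed
  qed
qed

theorem lemma7p5:
  fixes r :: "'a::finite \<Rightarrow> 'a \<Rightarrow> real" and d :: real and N k :: nat and x :: 'a
    and \<mu> :: "('a \<Rightarrow> nat) \<Rightarrow> real"
  assumes "card (UNIV :: 'a set) \<ge> 2"
    and "\<And>a. r a a = 0"
    and "\<And>a b. a \<noteq> b \<Longrightarrow> r a b > 0"
    and "d > 0"
    and "incl_invariant d r N \<mu>"
    and "k < N"
  shows "(\<Sum>\<eta>\<in>site_count_set N x (k+1). \<mu> \<eta>)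
     \<le> (R2 r * (real k + d) * real (N - k)) / (R1 r * real (k + 1) * (real (N - k - 1) + d))
        * (\<Sum>\<eta>\<in>site_count_set N x k. \<mu> \<eta>)"
proof -
  note r0 = assms(2) and rpos = assms(3) and dpos = assms(4)
  have inv: "\<And>F. (\<Sum>\<eta>\<in>config_space N. \<mu> \<eta> * incl_gen d r F \<eta>) = 0"
    and mu0: "\<And>\<eta>. \<mu> \<eta> \<ge> 0"
    using assms(5) by (auto simp: incl_invariant_def)
  have fin: "finite (config_space N :: ('a \<Rightarrow> nat) set)" by (rule config_finite)
  obtain y0 where y0: "y0 \<noteq> x"
  proof -
    have "\<not> UNIV \<subseteq> {x}"
    proof
      assume "UNIV \<subseteq> {x}"
      then have "card (UNIV :: 'a set) \<le> card {x}" by (intro card_mono) auto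
      then show False using assms(1) by simp
    qed
    then show ?thesis using that by blast
  qed
  define RS where "RS = {r a b | a b. r a b > 0}"
  have RSfin: "finite RS"
  proof -
    have "RS \<subseteq> (\<lambda>(a,b). r a b) ` UNIV" by (auto simp: RS_def)
    then show ?thesis by (rule finite_subset) simp
  qed
  have R1le: "R1 r \<le> r a b" if "a \<noteq> b" for a b
    unfolding R1_def RS_def[symmetric] using RSfin rpos[OF that] by (intro Min_le) (auto simp: RS_def)
  have R1pos: "R1 r > 0"
  proof -
    have "RS \<noteq> {}" using rpos[OF y0] by (auto simp: RS_def)
    then have "R1 r \<in> RS" unfolding R1_def RS_def[symmetric] using RSfin by (rule Min_in[rotated])
    then show ?thesis by (auto simp: RS_def)
  qed
  have R2ge: "r a b \<le> R2 r" for a b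
  proof -
    have "finite {r a b | a b. True}"
    proof -
      have "{r a b | a b. True} \<subseteq> (\<lambda>(a,b). r a b) ` UNIV" by auto
      then show ?thesis by (rule finite_subset) simp
    qed
    then show ?thesis unfolding R2_def by (intro Max_ge) auto
  qed
  define F :: "('a \<Rightarrow> nat) \<Rightarrow> real" where "F \<eta> = (if \<eta> x \<le> k then 1 else 0)" for \<eta>
  define P where "P \<eta> = (\<Sum>y\<in>UNIV - {x}. real (k+1) * (d + real (\<eta> y)) * r x y)" for \<eta> :: "'a \<Rightarrow> nat"
  define Q where "Q \<eta> = (\<Sum>z\<in>UNIV - {x}. real (\<eta> z) * (d + real k) * r z x)" for \<eta> :: "'a \<Rightarrow> nat"
  have term_eq: "real (\<eta> z) * (d + real (\<eta> y)) * r z y * (F (sigma_move z y \<eta>) - F \<eta>)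
      = (if z = x \<and> \<eta> x = k+1 then real (k+1) * (d + real (\<eta> y)) * r x y else 0)
        - (if y = x \<and> \<eta> x = k then real (\<eta> z) * (d + real k) * r z x else 0)"
    if "z \<noteq> y" for \<eta> z y
    using that unfolding F_def by (rule term_eq_lemma)
  have gen: "incl_gen d r F \<eta> = (if \<eta> x = k+1 then P \<eta> else 0) - (if \<eta> x = k then Q \<eta> else 0)" for \<eta>
  proof -
    have "incl_gen d r F \<eta> = (\<Sum>z\<in>UNIV. \<Sum>y\<in>UNIV - {z}.
        (if z = x \<and> \<eta> x = k+1 then real (k+1) * (d + real (\<eta> y)) * r x y else 0)
        - (if y = x \<and> \<eta> x = k then real (\<eta> z) * (d + real k) * r z x else 0))"
      unfolding incl_gen_def by (intro sum.cong refl) (simp add: term_eq)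
    also have "\<dots> = (\<Sum>z\<in>UNIV. \<Sum>y\<in>UNIV - {z}.
        (if z = x \<and> \<eta> x = k+1 then real (k+1) * (d + real (\<eta> y)) * r x y else 0))
        - (\<Sum>z\<in>UNIV. \<Sum>y\<in>UNIV - {z}. (if y = x \<and> \<eta> x = k then real (\<eta> z) * (d + real k) * r z x else 0))"
      by (simp add: sum_subtractf)
    also have "(\<Sum>z\<in>UNIV. \<Sum>y\<in>UNIV - {z}.
        (if z = x \<and> \<eta> x = k+1 then real (k+1) * (d + real (\<eta> y)) * r x y else 0))
        = (if \<eta> x = k+1 then P \<eta> else 0)"
    proof (cases "\<eta> x = k+1")
      case True
      have "(\<Sum>z\<in>UNIV. \<Sum>y\<in>UNIV - {z}.
        (if z = x \<and> \<eta> x = k+1 then real (k+1) * (d + real (\<eta> y)) * r x y else 0))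
        = (\<Sum>z\<in>UNIV. if z = x then (\<Sum>y\<in>UNIV - {x}. real (k+1) * (d + real (\<eta> y)) * r x y) else 0)"
        by (intro sum.cong refl) (simp add: True)
      then show ?thesis by (simp add: P_def True)
    qed simp
    also have "(\<Sum>z\<in>UNIV. \<Sum>y\<in>UNIV - {z}. (if y = x \<and> \<eta> x = k then real (\<eta> z) * (d + real k) * r z x else 0))
        = (if \<eta> x = k then Q \<eta> else 0)"
    proof -
      have "(\<Sum>z\<in>UNIV. \<Sum>y\<in>UNIV - {z}. (if y = x \<and> \<eta> x = k then real (\<eta> z) * (d + real k) * r z x else 0))
         = (\<Sum>z\<in>UNIV. if \<eta> x = k then real (\<eta> z) * (d + real k) * r z x else 0)"
        by (intro sum.cong refl) (auto simp: r0)
      then show ?thesis by (simp add: Q_def sum.remove[of UNIV x] r0)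
    qed
    finally show ?thesis .
  qed
  define A where "A = site_count_set N x k"
  define B where "B = site_count_set N x (k+1)"
  have AB: "A = {\<eta> \<in> config_space N. \<eta> x = k}" "B = {\<eta> \<in> config_space N. \<eta> x = k+1}"
    by (auto simp: A_def B_def site_count_set_def)
  have "0 = (\<Sum>\<eta>\<in>config_space N. \<mu> \<eta> * incl_gen d r F \<eta>)" using inv by simp
  also have "\<dots> = (\<Sum>\<eta>\<in>config_space N. if \<eta> x = k+1 then \<mu> \<eta> * P \<eta> else 0)
      - (\<Sum>\<eta>\<in>config_space N. if \<eta> x = k then \<mu> \<eta> * Q \<eta> else 0)"
    by (simp add: gen right_diff_distrib sum_subtractf if_distrib[of "\<lambda>t. _ * t"] cong: if_cong)
  also have "\<dots> = (\<Sum>\<eta>\<in>B. \<mu> \<eta> * P \<eta>) - (\<Sum>\<eta>\<in>A. \<mu> \<eta> * Q \<eta>)"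
    unfolding AB using fin by (simp add: sum.inter_filter)
  finally have bal: "(\<Sum>\<eta>\<in>B. \<mu> \<eta> * P \<eta>) = (\<Sum>\<eta>\<in>A. \<mu> \<eta> * Q \<eta>)" by simp
  have Pge: "P \<eta> \<ge> real (k+1) * R1 r * (real (N - k - 1) + d)" if "\<eta> \<in> B" for \<eta>
  proof -
    have H: "\<eta> \<in> config_space N" "\<eta> x = k+1" using that AB by auto
    have "P \<eta> \<ge> (\<Sum>y\<in>UNIV - {x}. real (k+1) * (d + real (\<eta> y)) * R1 r)"
      unfolding P_def using dpos R1le by (intro sum_mono mult_left_mono) auto
    also have "(\<Sum>y\<in>UNIV - {x}. real (k+1) * (d + real (\<eta> y)) * R1 r)
       = real (k+1) * R1 r * (real (card (UNIV - {x})) * d + (\<Sum>y\<in>UNIV - {x}. real (\<eta> y)))"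
      by (simp add: sum_distrib_left sum_distrib_right sum.distrib algebra_simps)
    also have "(\<Sum>y\<in>UNIV - {x}. real (\<eta> y)) = real (N - k - 1)"
      using sum_rest[OF H(1), of x] H(2) assms(6) by simp
    finally have 1: "P \<eta> \<ge> real (k+1) * R1 r * (real (card (UNIV - {x})) * d + real (N - k - 1))" .
    have "card (UNIV - {x}) \<ge> 1" using assms(1) by (simp add: card_Diff_singleton)
    then have "real (card (UNIV - {x})) * d \<ge> d" using dpos by simp
    then have "real (k+1) * R1 r * (real (N - k - 1) + d) \<le> real (k+1) * R1 r * (real (card (UNIV - {x})) * d + real (N - k - 1))"
      using R1pos by (intro mult_left_mono) auto
    then show ?thesis using 1 by linarith
  qed
  have Qle: "Q \<eta> \<le> (real k + d) * R2 r * real (N - k)" if "\<eta> \<in> A" for \<eta>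
  proof -
    have H: "\<eta> \<in> config_space N" "\<eta> x = k" using that AB by auto
    have "Q \<eta> \<le> (\<Sum>z\<in>UNIV - {x}. real (\<eta> z) * (d + real k) * R2 r)"
      unfolding Q_def using dpos R2ge by (intro sum_mono mult_left_mono) auto
    also have "\<dots> = (d + real k) * R2 r * (\<Sum>z\<in>UNIV - {x}. real (\<eta> z))"
      by (simp add: sum_distrib_left sum_distrib_right algebra_simps)
    also have "(\<Sum>y\<in>UNIV - {x}. real (\<eta> y)) = real (N - k)"
      using sum_rest[OF H(1), of x] H(2) assms(6) by simp
    finally show ?thesis by (simp add: algebra_simps)
  qed
  define C where "C = (real k + d) * R2 r * real (N - k)"
  define D where "D = real (k+1) * R1 r * (real (N - k - 1) + d)"
  have Dpos: "D > 0" unfolding D_def using R1pos dpos by (intro mult_pos_pos) auto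
  have "D * (\<Sum>\<eta>\<in>B. \<mu> \<eta>) = (\<Sum>\<eta>\<in>B. \<mu> \<eta> * D)" by (simp add: sum_distrib_left mult.commute)
  also have "\<dots> \<le> (\<Sum>\<eta>\<in>B. \<mu> \<eta> * P \<eta>)"
    using Pge mu0 unfolding D_def by (intro sum_mono mult_left_mono) auto
  also have "\<dots> = (\<Sum>\<eta>\<in>A. \<mu> \<eta> * Q \<eta>)" by (rule bal)
  also have "\<dots> \<le> (\<Sum>\<eta>\<in>A. \<mu> \<eta> * C)"
    using Qle mu0 unfolding C_def by (intro sum_mono mult_left_mono) auto
  also have "\<dots> = C * (\<Sum>\<eta>\<in>A. \<mu> \<eta>)" by (simp add: sum_distrib_left mult.commute)
  finally have main: "D * (\<Sum>\<eta>\<in>B. \<mu> \<eta>) \<le> C * (\<Sum>\<eta>\<in>A. \<mu> \<eta>)" .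
  have "(\<Sum>\<eta>\<in>B. \<mu> \<eta>) \<le> C / D * (\<Sum>\<eta>\<in>A. \<mu> \<eta>)"
    using main Dpos by (simp add: field_simps)
  moreover have "C / D = (R2 r * (real k + d) * real (N - k)) / (R1 r * real (k + 1) * (real (N - k - 1) + d))"
    unfolding C_def D_def by (simp add: algebra_simps)
  ultimately show ?thesis unfolding A_def B_def by simp
qed

end
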